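(* Let $N, N'$ be networks, $i \in V(N)$, $i' \in V(N')$, and $k \ge 0$. The following are equivalent: (a) $(N,i) \sim_k (N',i')$. (b) Agents $i$ in $N$ and $i'$ in $N'$ have the same initial local information and receive the same messages in each of the first $k$ rounds of the full-information protocol. (c) If the system is synchronous, then $i$ and $i'$ have the same initial local information and receive the same messages in each of the first $k$ rounds of every deterministic protocol.
   Context: A network is a directed, simple (no self-loops), connected, finite graph whose nodes (agents) are labeled by input values and whose edges are labeled by weights. For a network $N$: $V(N)$ is its set of agents, $E(N)$ its set of edges, $Out_N(i)=\{j : (i,j)\in E(N)\}$, $In_N(i)=\{j : (j,i)\in E(N)\}$, $in_N(i)$ is $i$'s input and $w_N(e)$ is the label of edge $e$. Communication is reliable (every message is eventually delivered, no duplication or corruption), no agent fails. Initially each agent knows only its local information: its own input, its number of outgoing links and the weights on them. Bisimilarity: $(N,i)\sim_0(N',i')$ iff $in_N(i)=in_{N'}(i')$ and there is a bijection $f^{out}:Out_N(i)\to Out_{N'}(i')$ with $w_N(i,j)=w_{N'}(i',f^{out}(j))$ for all $j$. For $k>0$, $(N,i)\sim_k(N',i')$ iff $(N,i)\sim_0(N',i')$ and there is a bijection $f^{in}:In_N(i)\to In_{N'}(i')$ such that for every $j\in In_N(i)$: $w_N(j,i)=w_{N'}(f^{in}(j),i')$; the edge $(j,i)$ is bidirectional (i.e. $(i,j)\in E(N)$ too) iff $(f^{in}(j),i')$ is bidirectional in $N'$; and $(N,j)\sim_{k-1}(N',f^{in}(j))$. The full-information protocol proceeds in rounds: in each round every agent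 sends to all its neighbors a message (stamped with the round number) describing all the information it has; an agent's round $k$ starts after it has received all round-$(k-1)$ messages from its neighbors. This round structure makes sense in both synchronous and asynchronous settings. *)

theory Defs
  imports Main "HOL-Library.Multiset"
begin

record ('v, 'x, 'w) network =
  nodes  :: "'v set"
  edges  :: "('v \<times> 'v) set"
  input  :: "'v \<Rightarrow> 'x"
  weight :: "'v \<times> 'v \<Rightarrow> 'w"

definition is_network :: "('v, 'x, 'w) network \<Rightarrow> bool" where
  "is_network N \<longleftrightarrow>
     finite (nodes N) \<and> nodes N \<noteq> {} \<and>
     edges N \<subseteq> nodes N \<times> nodes N \<and>
     (\<forall>v. (v, v) \<notin> edges N) \<and>
     (\<forall>u\<in>nodes N. \<forall>v\<in>nodes N. (u, v) \<in> (edges N)\<^sup>*)"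

definition Out :: "('v, 'x, 'w) network \<Rightarrow> 'v \<Rightarrow> 'v set" where
  "Out N i = {j. (i, j) \<in> edges N}"

definition In :: "('v, 'x, 'w) network \<Rightarrow> 'v \<Rightarrow> 'v set" where
  "In N i = {j. (j, i) \<in> edges N}"

definition bisim0 :: "('v, 'x, 'w) network \<Rightarrow> 'v \<Rightarrow> ('u, 'x, 'w) network \<Rightarrow> 'u \<Rightarrow> bool" where
  "bisim0 N i N' i' \<longleftrightarrow>
     input N i = input N' i' \<and>
     (\<exists>f. bij_betw f (Out N i) (Out N' i') \<and>
          (\<forall>j\<in>Out N i. weight N (i, j) = weight N' (i', f j)))"

primrec bisim :: "nat \<Rightarrow> ('v, 'x, 'w) network \<Rightarrow> 'v \<Rightarrow> ('u, 'x, 'w) network \<Rightarrow> 'u \<Rightarrow> bool" where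
  "bisim 0 N i N' i' = bisim0 N i N' i'"
| "bisim (Suc k) N i N' i' =
     (bisim0 N i N' i' \<and>
      (\<exists>f. bij_betw f (In N i) (In N' i') \<and>
           (\<forall>j\<in>In N i.
              weight N (j, i) = weight N' (f j, i') \<and>
              ((i, j) \<in> edges N \<longleftrightarrow> (i', f j) \<in> edges N') \<and>
              bisim k N j N' (f j))))"

text \<open>Initial local information: own input and the multiset of weights on the
  outgoing links (this determines the number of outgoing links).\<close>
definition out_weights :: "('v, 'x, 'w) network \<Rightarrow> 'v \<Rightarrow> 'w multiset" where
  "out_weights N i = image_mset (\<lambda>j. weight N (i, j)) (mset_set (Out N i))"

definition local_info :: "('v, 'x, 'w) network \<Rightarrow> 'v \<Rightarrow> 'x \<times> 'w multiset" where
  "local_info N i = (input N i, out_weights N i)"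

text \<open>The full information an agent has: its initial information, extended
  round by round with the multiset of received messages. Each received message
  is tagged with the weight of the incoming link and whether that link is
  bidirectional.\<close>
datatype ('x, 'w) fview =
    FInit 'x "'w multiset"
  | FStep "('x, 'w) fview" "('w \<times> bool \<times> ('x, 'w) fview) multiset"

text \<open>fi_view N r i: all information of agent i after r rounds of the
  full-information protocol (= the message i sends in round r+1).\<close>
primrec fi_view :: "('v, 'x, 'w) network \<Rightarrow> nat \<Rightarrow> 'v \<Rightarrow> ('x, 'w) fview" where
  "fi_view N 0 = (\<lambda>i. FInit (input N i) (out_weights N i))"
| "fi_view N (Suc r) = (\<lambda>i. FStep (fi_view N r i)
      {# (weight N (j, i), (i, j) \<in> edges N, fi_view N r j). j \<in># mset_set (In N i) #})"

text \<open>Messages received by agent i in round r (r \<ge> 1) of the full-information protocol.\<close>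
definition fi_recv :: "('v, 'x, 'w) network \<Rightarrow> nat \<Rightarrow> 'v \<Rightarrow> ('w \<times> bool \<times> ('x, 'w) fview) multiset" where
  "fi_recv N r i = {# (weight N (j, i), (i, j) \<in> edges N, fi_view N (r - 1) j). j \<in># mset_set (In N i) #}"

definition fi_same :: "nat \<Rightarrow> ('v, 'x, 'w) network \<Rightarrow> 'v \<Rightarrow> ('u, 'x, 'w) network \<Rightarrow> 'u \<Rightarrow> bool" where
  "fi_same k N i N' i' \<longleftrightarrow>
     local_info N i = local_info N' i' \<and> (\<forall>r\<in>{1..k}. fi_recv N r i = fi_recv N' r i')"

text \<open>A deterministic protocol: initial state from the local information, the
  message sent on an outgoing link as a function of the current state and the
  link's weight, and the state transition on the multiset of messages received
  in a round (tagged with incoming-link weight and bidirectionality).\<close>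
record ('x, 'w, 's, 'm) protocol =
  pinit  :: "'x \<Rightarrow> 'w multiset \<Rightarrow> 's"
  psend  :: "'s \<Rightarrow> 'w \<Rightarrow> 'm"
  ptrans :: "'s \<Rightarrow> ('w \<times> bool \<times> 'm) multiset \<Rightarrow> 's"

primrec p_state :: "('x, 'w, 's, 'm) protocol \<Rightarrow> ('v, 'x, 'w) network \<Rightarrow> nat \<Rightarrow> 'v \<Rightarrow> 's" where
  "p_state P N 0 = (\<lambda>i. pinit P (input N i) (out_weights N i))"
| "p_state P N (Suc r) = (\<lambda>i. ptrans P (p_state P N r i)
      {# (weight N (j, i), (i, j) \<in> edges N, psend P (p_state P N r j) (weight N (j, i))).
         j \<in># mset_set (In N i) #})"

text \<open>Messages received by agent i in round r (r \<ge> 1) of protocol P, synchronous run.\<close>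
definition p_recv :: "('x, 'w, 's, 'm) protocol \<Rightarrow> ('v, 'x, 'w) network \<Rightarrow> nat \<Rightarrow> 'v \<Rightarrow> ('w \<times> bool \<times> 'm) multiset" where
  "p_recv P N r i = {# (weight N (j, i), (i, j) \<in> edges N,
                        psend P (p_state P N (r - 1) j) (weight N (j, i))). j \<in># mset_set (In N i) #}"

definition sync_same :: "('x, 'w, 's, 'm) protocol \<Rightarrow> nat \<Rightarrow> ('v, 'x, 'w) network \<Rightarrow> 'v \<Rightarrow> ('u, 'x, 'w) network \<Rightarrow> 'u \<Rightarrow> bool" where
  "sync_same P k N i N' i' \<longleftrightarrow>
     local_info N i = local_info N' i' \<and> (\<forall>r\<in>{1..k}. p_recv P N r i = p_recv P N' r i')"

end

theory Submission
  imports Defs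
begin

lemma net_fin:
  assumes "is_network N"
  shows "finite (In N i)" "finite (Out N i)"
proof -
  have f: "finite (edges N)" using assms unfolding is_network_def
    by (meson finite_SigmaI finite_subset)
  have "In N i \<subseteq> fst ` edges N" unfolding In_def by force
  thus "finite (In N i)" using f finite_subset by blast
  have "Out N i \<subseteq> snd ` edges N" unfolding Out_def by force
  thus "finite (Out N i)" using f finite_subset by blast
qed

lemma mset_bij_imp:
  assumes "finite A" "bij_betw f A B" "\<forall>a\<in>A. g a = g' (f a)"
  shows "image_mset g (mset_set A) = image_mset g' (mset_set B)"
proof -
  have B: "B = f ` A" "inj_on f A" using assms(2) unfolding bij_betw_def by auto
  have "image_mset g' (mset_set B) = image_mset g' (image_mset f (mset_set A))"
    using B image_mset_mset_set by metis
  also have "\<dots> = image_mset (g' \<circ> f) (mset_set A)" by (simp add: multiset.map_comp)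
  also have "\<dots> = image_mset g (mset_set A)"
    using assms(1,3) by (intro image_mset_cong) auto
  finally show ?thesis by simp
qed

lemma mset_eq_imp_bij:
  assumes "finite A"
  shows "finite B \<Longrightarrow> image_mset g (mset_set A) = image_mset g' (mset_set B) \<Longrightarrow>
    \<exists>f. bij_betw f A B \<and> (\<forall>a\<in>A. g a = g' (f a))"
  using assms
proof (induction A arbitrary: B rule: finite_induct)
  case empty
  then have "B = {}" by (metis image_mset_is_empty_iff mset_set.empty mset_set_empty_iff)
  thus ?case by (auto simp: bij_betw_def)
next
  case (insert a A)
  have eq: "image_mset g' (mset_set B) = add_mset (g a) (image_mset g (mset_set A))"
    using insert by simp
  then have "g a \<in># image_mset g' (mset_set B)" by simp
  then obtain b where b: "b \<in> B" "g' b = g a" using insert(4) by auto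
  have "mset_set B = add_mset b (mset_set (B - {b}))"
    using b insert(4) by (simp add: mset_set.remove)
  then have "image_mset g' (mset_set (B - {b})) = image_mset g (mset_set A)"
    using eq b by simp
  then obtain f0 where f0: "bij_betw f0 A (B - {b})" "\<forall>x\<in>A. g x = g' (f0 x)"
    using insert by (metis finite_Diff)
  define f where "f = f0(a := b)"
  have fA: "\<forall>x\<in>A. f x = f0 x" unfolding f_def using insert(2) by auto
  have "bij_betw f A (B - {b})" using f0(1) fA bij_betw_cong[of A f f0] by simp
  moreover have "f a = b" unfolding f_def by simp
  ultimately have "bij_betw f (A \<union> {a}) ((B - {b}) \<union> {b})"
    using notIn_Un_bij_betw3[of a A f "B - {b}"] insert(2) by simp
  moreover have "(B - {b}) \<union> {b} = B" using b by auto
  ultimately have bj: "bij_betw f (insert a A) B" by simp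
  have gg: "\<forall>x\<in>insert a A. g x = g' (f x)" using f0 b insert(2) unfolding f_def by auto
  show ?case using bj gg by blast
qed

lemma mset_eq_bij:
  assumes "finite A" "finite B"
  shows "image_mset g (mset_set A) = image_mset g' (mset_set B) \<longleftrightarrow>
    (\<exists>f. bij_betw f A B \<and> (\<forall>a\<in>A. g a = g' (f a)))"
  using mset_eq_imp_bij[OF assms] mset_bij_imp[OF assms(1)] by blast


lemma bisim0_iff:
  assumes "is_network N" "is_network N'"
  shows "bisim0 N i N' i' \<longleftrightarrow> local_info N i = local_info N' i'"
  unfolding bisim0_def local_info_def out_weights_def
  using mset_eq_bij[OF net_fin(2)[OF assms(1), of i] net_fin(2)[OF assms(2), of i'],
      where g="\<lambda>j. weight N (i, j)" and g'="\<lambda>j. weight N' (i', j)"]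
  by auto

lemma bisim_bisim0: "bisim k N i N' i' \<Longrightarrow> bisim0 N i N' i'"
  by (cases k) auto

lemma bisim_Suc_mono: "bisim (Suc k) N i N' i' \<Longrightarrow> bisim k N i N' i'"
proof (induction k arbitrary: i i')
  case 0
  then show ?case by simp
next
  case (Suc k)
  from Suc.prems obtain f where f: "bisim0 N i N' i'" "bij_betw f (In N i) (In N' i')"
    "\<forall>j\<in>In N i. weight N (j, i) = weight N' (f j, i') \<and>
              ((i, j) \<in> edges N \<longleftrightarrow> (i', f j) \<in> edges N') \<and>
              bisim (Suc k) N j N' (f j)" by auto
  show ?case using f Suc.IH by (simp only: bisim.simps) blast
qed

lemma prop4: "(A \<longleftrightarrow> B \<and> X) \<Longrightarrow> (C \<longleftrightarrow> D \<and> X) \<Longrightarrow> (C \<Longrightarrow> B) \<Longrightarrow> (B \<Longrightarrow> D) \<Longrightarrow> (A \<longleftrightarrow> C)"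
  by blast

lemma fi_view_bisim:
  assumes "is_network N" "is_network N'"
  shows "fi_view N k i = fi_view N' k i' \<longleftrightarrow> bisim k N i N' i'"
proof (induction k arbitrary: i i')
  case 0
  then show ?case using bisim0_iff[OF assms] by (simp add: local_info_def)
next
  case (Suc k)
  have M: "(image_mset (\<lambda>j. (weight N (j, i), (i, j) \<in> edges N, fi_view N k j)) (mset_set (In N i))
        = image_mset (\<lambda>j. (weight N' (j, i'), (i', j) \<in> edges N', fi_view N' k j)) (mset_set (In N' i')))
     \<longleftrightarrow> (\<exists>f. bij_betw f (In N i) (In N' i') \<and>
           (\<forall>j\<in>In N i.
              weight N (j, i) = weight N' (f j, i') \<and>
              ((i, j) \<in> edges N \<longleftrightarrow> (i', f j) \<in> edges N') \<and>
              bisim k N j N' (f j)))"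
    using mset_eq_bij[OF net_fin(1)[OF assms(1), of i] net_fin(1)[OF assms(2), of i'],
      where g="\<lambda>j. (weight N (j, i), (i, j) \<in> edges N, fi_view N k j)"
      and g'="\<lambda>j. (weight N' (j, i'), (i', j) \<in> edges N', fi_view N' k j)"] Suc.IH
    by simp
  have "fi_view N (Suc k) i = fi_view N' (Suc k) i' \<longleftrightarrow>
     bisim k N i N' i' \<and> (\<exists>f. bij_betw f (In N i) (In N' i') \<and>
           (\<forall>j\<in>In N i.
              weight N (j, i) = weight N' (f j, i') \<and>
              ((i, j) \<in> edges N \<longleftrightarrow> (i', f j) \<in> edges N') \<and>
              bisim k N j N' (f j)))"
    using M Suc.IH by simp
  moreover have "bisim (Suc k) N i N' i' \<longleftrightarrow> bisim0 N i N' i' \<and> (\<exists>f. bij_betw f (In N i) (In N' i') \<and>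
           (\<forall>j\<in>In N i.
              weight N (j, i) = weight N' (f j, i') \<and>
              ((i, j) \<in> edges N \<longleftrightarrow> (i', f j) \<in> edges N') \<and>
              bisim k N j N' (f j)))" by (simp only: bisim.simps)
  ultimately show ?case using bisim_Suc_mono[of k N i N' i'] bisim_bisim0[of k N i N' i']
    by (rule prop4)
qed

lemma Icc_Suc: "{1..Suc k} = insert (Suc k) {1..k}" by auto

lemma fi_same_view:
  "fi_same k N i N' i' \<longleftrightarrow> fi_view N k i = fi_view N' k i'"
proof (induction k)
  case 0
  then show ?case by (simp add: fi_same_def local_info_def)
next
  case (Suc k)
  have "fi_same (Suc k) N i N' i' \<longleftrightarrow> fi_same k N i N' i' \<and> fi_recv N (Suc k) i = fi_recv N' (Suc k) i'"
    unfolding fi_same_def Icc_Suc by auto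
  then show ?case using Suc.IH by (simp add: fi_recv_def)
qed

lemma fi_view_pstate:
  assumes "is_network N" "is_network N'"
  shows "fi_view N k i = fi_view N' k i' \<Longrightarrow> p_state P N k i = p_state P N' k i'"
proof (induction k arbitrary: i i')
  case 0
  then show ?case by simp
next
  case (Suc k)
  from Suc.prems have e1: "fi_view N k i = fi_view N' k i'" by simp
  from Suc.prems have "image_mset (\<lambda>j. (weight N (j, i), (i, j) \<in> edges N, fi_view N k j)) (mset_set (In N i))
        = image_mset (\<lambda>j. (weight N' (j, i'), (i', j) \<in> edges N', fi_view N' k j)) (mset_set (In N' i'))"
    by simp
  then obtain f where f: "bij_betw f (In N i) (In N' i')"
    "\<forall>j\<in>In N i. (weight N (j, i), (i, j) \<in> edges N, fi_view N k j) =
        (weight N' (f j, i'), (i', f j) \<in> edges N', fi_view N' k (f j))"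
    using iffD1[OF mset_eq_bij[OF net_fin(1)[OF assms(1), of i] net_fin(1)[OF assms(2), of i'],
      where g="\<lambda>j. (weight N (j, i), (i, j) \<in> edges N, fi_view N k j)"
      and g'="\<lambda>j. (weight N' (j, i'), (i', j) \<in> edges N', fi_view N' k j)"]] by blast
  have pw: "(weight N (j, i), (i, j) \<in> edges N, psend P (p_state P N k j) (weight N (j, i))) =
     (weight N' (f j, i'), (i', f j) \<in> edges N', psend P (p_state P N' k (f j)) (weight N' (f j, i')))"
    if j: "j \<in> In N i" for j
  proof -
    have a: "weight N (j, i) = weight N' (f j, i')" "((i, j) \<in> edges N) = ((i', f j) \<in> edges N')"
      "fi_view N k j = fi_view N' k (f j)" using f(2) j by auto
    have "p_state P N k j = p_state P N' k (f j)" using Suc.IH[OF a(3)] .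
    then show ?thesis using a(1,2) by simp
  qed
  have "image_mset (\<lambda>j. (weight N (j, i), (i, j) \<in> edges N, psend P (p_state P N k j) (weight N (j, i)))) (mset_set (In N i))
     = image_mset (\<lambda>j. (weight N' (j, i'), (i', j) \<in> edges N', psend P (p_state P N' k j) (weight N' (j, i')))) (mset_set (In N' i'))"
    using pw by (intro mset_bij_imp[OF net_fin(1)[OF assms(1)] f(1)]) blast
  then show ?case using Suc.IH[OF e1] by simp
qed

lemma fi_same_sync:
  assumes "is_network N" "is_network N'" "fi_same k N i N' i'"
  shows "sync_same P k N i N' i'"
  unfolding sync_same_def
proof (intro conjI ballI)
  show "local_info N i = local_info N' i'" using assms(3) by (simp add: fi_same_def)
  fix r assume r: "r \<in> {1..k}"
  then have "fi_recv N r i = fi_recv N' r i'" using assms(3) by (simp add: fi_same_def)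
  then obtain f where f: "bij_betw f (In N i) (In N' i')"
    "\<forall>j\<in>In N i. (weight N (j, i), (i, j) \<in> edges N, fi_view N (r-1) j) =
        (weight N' (f j, i'), (i', f j) \<in> edges N', fi_view N' (r-1) (f j))"
    unfolding fi_recv_def
    using iffD1[OF mset_eq_bij[OF net_fin(1)[OF assms(1), of i] net_fin(1)[OF assms(2), of i'],
      where g="\<lambda>j. (weight N (j, i), (i, j) \<in> edges N, fi_view N (r-1) j)"
      and g'="\<lambda>j. (weight N' (j, i'), (i', j) \<in> edges N', fi_view N' (r-1) j)"]] by blast
  have pw: "(weight N (j, i), (i, j) \<in> edges N, psend P (p_state P N (r-1) j) (weight N (j, i))) =
     (weight N' (f j, i'), (i', f j) \<in> edges N', psend P (p_state P N' (r-1) (f j)) (weight N' (f j, i')))"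
    if j: "j \<in> In N i" for j
  proof -
    have a: "weight N (j, i) = weight N' (f j, i')" "((i, j) \<in> edges N) = ((i', f j) \<in> edges N')"
      "fi_view N (r-1) j = fi_view N' (r-1) (f j)" using f(2) j by auto
    have "p_state P N (r-1) j = p_state P N' (r-1) (f j)"
      using fi_view_pstate[OF assms(1,2) a(3)] .
    then show ?thesis using a(1,2) by simp
  qed
  show "p_recv P N r i = p_recv P N' r i'"
    unfolding p_recv_def
    using pw by (intro mset_bij_imp[OF net_fin(1)[OF assms(1)] f(1)]) blast
qed

definition FP :: "('x, 'w, ('x, 'w) fview, ('x, 'w) fview) protocol" where
  "FP = \<lparr>pinit = FInit, psend = (\<lambda>s w. s), ptrans = FStep\<rparr>"

lemma FP_psend[simp]: "psend FP s w = s" by (simp add: FP_def)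

lemma FP_state: "p_state FP N r = fi_view N r"
  by (induction r) (auto simp: FP_def)

lemma FP_sync: "sync_same FP k N i N' i' \<longleftrightarrow> fi_same k N i N' i'"
  unfolding sync_same_def fi_same_def p_recv_def fi_recv_def
  by (simp add: FP_state)

theorem lemma2p2:
  fixes N :: "('v, 'x, 'w) network" and N' :: "('u, 'x, 'w) network"
    and i :: 'v and i' :: 'u and k :: nat
  assumes "is_network N" and "is_network N'"
    and "i \<in> nodes N" and "i' \<in> nodes N'"
  shows "(bisim k N i N' i' \<longleftrightarrow> fi_same k N i N' i')
       \<and> (bisim k N i N' i' \<longrightarrow> (\<forall>P :: ('x, 'w, 's, 'm) protocol. sync_same P k N i N' i'))
       \<and> ((\<forall>P :: ('x, 'w, ('x, 'w) fview, ('x, 'w) fview) protocol. sync_same P k N i N' i')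
            \<longrightarrow> bisim k N i N' i')"
proof -
  have e: "bisim k N i N' i' \<longleftrightarrow> fi_same k N i N' i'"
    using fi_same_view[of k N i N' i'] fi_view_bisim[OF assms(1,2), of k i i'] by simp
  have c: "bisim k N i N' i' \<longrightarrow> (\<forall>P :: ('x, 'w, 's, 'm) protocol. sync_same P k N i N' i')"
  proof (intro impI allI)
    fix P :: "('x, 'w, 's, 'm) protocol"
    assume "bisim k N i N' i'"
    then have "fi_same k N i N' i'" using e by simp
    then show "sync_same P k N i N' i'" by (rule fi_same_sync[OF assms(1,2)])
  qed
  have d: "(\<forall>P :: ('x, 'w, ('x, 'w) fview, ('x, 'w) fview) protocol. sync_same P k N i N' i')
            \<longrightarrow> bisim k N i N' i'"
  proof
    assume "\<forall>P :: ('x, 'w, ('x, 'w) fview, ('x, 'w) fview) protocol. sync_same P k N i N' i'"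
    then have "sync_same FP k N i N' i'" by (rule allE)
    then have "fi_same k N i N' i'" using FP_sync by (rule iffD1[rotated])
    then show "bisim k N i N' i'" using e by simp
  qed
  show ?thesis using e c d by (intro conjI) assumption+
qed

end
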